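(* There is a constant $c>0$ such that, for every $n$, if the adversary generating the dynamic graphs $G_1=(V,E_1),G_2=(V,E_2),\dots$ on $n$ nodes is allowed to choose the edge sets $E_1,E_2,\dots$ adaptively without having to preserve node degrees, then there is such an adaptive adversary and an initial assignment of opinions for which the expected consensus time of the standard voter model is at least $\Omega\big((n/c)^{n/c}\big)$.
   Context: Standard voter model on a sequence of graphs $G_1,G_2,\dots$ on a common vertex set $V$ of $n$ nodes: every node initially holds an opinion; in each synchronous round $t$, every node independently chooses a neighbour in $G_t$ uniformly at random and with probability $1/2$ adopts that neighbour's opinion (as at the start of the round), otherwise keeps its own. An adaptive adversary chooses $G_{t+1}$ knowing the opinions of all nodes up to round $t$. The consensus time is the first round after which all nodes hold the same opinion. *)

theory Defs
  imports "HOL-Probability.Probability"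
begin

text \<open>Vertex set V = {0..<n}; opinions are natural numbers; a configuration
  assigns an opinion to every node (values outside V are irrelevant).
  A graph on V is an edge set E of ordered pairs.\<close>

type_synonym config = "nat \<Rightarrow> nat"
type_synonym graph = "(nat \<times> nat) set"

definition vertices :: "nat \<Rightarrow> nat set" where
  "vertices n = {..<n}"

text \<open>Admissible graph: simple undirected (symmetric, loop-free) graph on V that
  is connected. No constraint on degrees.\<close>
definition valid_graph :: "nat \<Rightarrow> graph \<Rightarrow> bool" where
  "valid_graph n E \<longleftrightarrow>
     E \<subseteq> vertices n \<times> vertices n \<and> sym E \<and> (\<forall>v. (v, v) \<notin> E) \<and>
     (\<forall>u\<in>vertices n. \<forall>v\<in>vertices n. (u, v) \<in> E\<^sup>*)"

definition nbrs :: "graph \<Rightarrow> nat \<Rightarrow> nat set" where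
  "nbrs E v = {u. (v, u) \<in> E}"

definition node_update :: "graph \<Rightarrow> config \<Rightarrow> nat \<Rightarrow> nat pmf" where
  "node_update E x v =
     bind_pmf (bernoulli_pmf (1/2))
       (\<lambda>b. if b then map_pmf x (pmf_of_set (nbrs E v)) else return_pmf (x v))"

definition voter_round :: "nat \<Rightarrow> graph \<Rightarrow> config \<Rightarrow> config pmf" where
  "voter_round n E x = Pi_pmf (vertices n) 0 (node_update E x)"

text \<open>A (deterministic) adaptive adversary maps the history of configurations
  [x_0, ..., x_t] to the graph G_(t+1) used in round t+1.\<close>
type_synonym adversary = "config list \<Rightarrow> graph"

definition valid_adversary :: "nat \<Rightarrow> adversary \<Rightarrow> bool" where
  "valid_adversary n adv \<longleftrightarrow> (\<forall>h. valid_graph n (adv h))"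

fun history :: "nat \<Rightarrow> adversary \<Rightarrow> config \<Rightarrow> nat \<Rightarrow> config list pmf" where
  "history n adv x0 0 = return_pmf [x0]"
| "history n adv x0 (Suc t) =
     bind_pmf (history n adv x0 t)
       (\<lambda>h. map_pmf (\<lambda>y. h @ [y]) (voter_round n (adv h) (last h)))"

definition consensus :: "nat \<Rightarrow> config \<Rightarrow> bool" where
  "consensus n x \<longleftrightarrow> (\<forall>u\<in>vertices n. \<forall>v\<in>vertices n. x u = x v)"

text \<open>P(T > t): no consensus at any of the times 0..t.\<close>
definition prob_not_consensus_by :: "nat \<Rightarrow> adversary \<Rightarrow> config \<Rightarrow> nat \<Rightarrow> real" where
  "prob_not_consensus_by n adv x0 t =
     measure_pmf.prob (history n adv x0 t) {h. \<forall>s\<le>t. \<not> consensus n (h ! s)}"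

text \<open>Expected consensus time E[T] = sum_(t>=0) P(T > t) (in [0, \<infinity>]).\<close>
definition expected_consensus_time :: "nat \<Rightarrow> adversary \<Rightarrow> config \<Rightarrow> ennreal" where
  "expected_consensus_time n adv x0 = (\<Sum>t. ennreal (prob_not_consensus_by n adv x0 t))"

end

theory Submission
  imports Defs
begin

lemma nn_int_node_update:
  assumes fin: "finite (nbrs E v)" and ne: "nbrs E v \<noteq> {}" and g: "\<And>z. g z \<ge> 0"
  shows "(\<integral>\<^sup>+z. ennreal (g z) \<partial>node_update E x v) =
         ennreal (g (x v) / 2 + (\<Sum>u\<in>nbrs E v. g (x u)) / (2 * card (nbrs E v)))"
proof -
  have c: "card (nbrs E v) > 0" using fin ne by (simp add: card_gt_0_iff)
  have "(\<integral>\<^sup>+z. ennreal (g z) \<partial>map_pmf x (pmf_of_set (nbrs E v)))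
        = ennreal ((\<Sum>u\<in>nbrs E v. g (x u)) / card (nbrs E v))"
    using fin ne c g
    apply (simp add: nn_integral_pmf_of_set ennreal_of_nat_eq_real_of_nat)
    apply (subst divide_ennreal)
      apply (auto intro: sum_nonneg g)
    done
  then show ?thesis
    unfolding node_update_def using g c
    apply simp
    apply (simp only: ennreal_half[symmetric] flip: ennreal_mult' ennreal_mult'')
    apply (subst ennreal_plus[symmetric])
      apply (simp_all add: sum_nonneg)
    done
qed

definition star :: "nat set \<Rightarrow> nat \<Rightarrow> graph" where
  "star A c = {(c,v) | v. v \<in> A \<and> v \<noteq> c} \<union> {(v,c) | v. v \<in> A \<and> v \<noteq> c}"
definition cls1 :: "nat \<Rightarrow> config \<Rightarrow> nat set" where "cls1 n x = {v. v < n \<and> x v = 1}"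
definition cls0 :: "nat \<Rightarrow> config \<Rightarrow> nat set" where "cls0 n x = {v. v < n \<and> x v \<noteq> 1}"
definition minc :: "nat \<Rightarrow> config \<Rightarrow> nat set" where
  "minc n x = (if card (cls1 n x) \<le> card (cls0 n x) then cls1 n x else cls0 n x)"
definition majc :: "nat \<Rightarrow> config \<Rightarrow> nat set" where
  "majc n x = (if card (cls1 n x) \<le> card (cls0 n x) then cls0 n x else cls1 n x)"
definition GG :: "nat \<Rightarrow> config \<Rightarrow> graph" where
  "GG n x = (if minc n x = {} then star {..<n} 0 else
     star (minc n x) (Min (minc n x)) \<union> star (majc n x) (Min (majc n x)) \<union>
     {(Max (majc n x), Min (minc n x)), (Min (minc n x), Max (majc n x))})"
definition advs :: "nat \<Rightarrow> adversary" where "advs n = (\<lambda>h. GG n (last h))"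

lemma cls_basic:
  shows "cls1 n x \<inter> cls0 n x = {}" "cls1 n x \<union> cls0 n x = {..<n}"
    "finite (cls1 n x)" "finite (cls0 n x)" "card (cls1 n x) + card (cls0 n x) = n"
proof -
  show 1: "cls1 n x \<inter> cls0 n x = {}" "cls1 n x \<union> cls0 n x = {..<n}"
    "finite (cls1 n x)" "finite (cls0 n x)" by (auto simp: cls1_def cls0_def)
  show "card (cls1 n x) + card (cls0 n x) = n"
    using card_Un_disjoint[of "cls1 n x" "cls0 n x"] 1 by simp
qed

lemma mm_basic:
  shows "minc n x \<inter> majc n x = {}" "minc n x \<union> majc n x = {..<n}"
    "finite (minc n x)" "finite (majc n x)" "card (minc n x) + card (majc n x) = n"
    "card (minc n x) \<le> card (majc n x)"
  using cls_basic[of n x] unfolding minc_def majc_def by (simp_all add: Un_commute Int_commute)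

lemma rtr_sym:
  assumes "sym E" "(u,v) \<in> E\<^sup>*" shows "(v,u) \<in> E\<^sup>*"
proof -
  have "(v,u) \<in> (E\<inverse>)\<^sup>*" using assms(2) by (simp add: rtrancl_converse)
  then show ?thesis using assms(1) by (simp add: sym_conv_converse_eq)
qed

lemma valid_graphI:
  assumes "E \<subseteq> vertices n \<times> vertices n" "sym E" "\<And>v. (v,v) \<notin> E"
    "\<And>v. v \<in> vertices n \<Longrightarrow> (r,v) \<in> E\<^sup>*"
  shows "valid_graph n E"
  unfolding valid_graph_def
proof (intro conjI ballI allI)
  show "E \<subseteq> vertices n \<times> vertices n" "sym E" by (rule assms)+
  show "\<And>v. (v,v) \<notin> E" by (rule assms)
  fix u v assume "u \<in> vertices n" "v \<in> vertices n"
  then have "(u,r) \<in> E\<^sup>*" "(r,v) \<in> E\<^sup>*" using assms(4) rtr_sym[OF assms(2)] by presburger+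
  then show "(u,v) \<in> E\<^sup>*" by (rule rtrancl_trans)
qed

lemma star_props:
  assumes "c \<in> A"
  shows "star A c \<subseteq> A \<times> A" "sym (star A c)" "\<And>v. (v,v) \<notin> star A c"
    "\<And>v. v \<in> A \<Longrightarrow> (c,v) \<in> (star A c)\<^sup>*"
proof -
  show "star A c \<subseteq> A \<times> A" using assms by (auto simp: star_def)
  show "sym (star A c)" by (auto simp: star_def sym_def)
  show "\<And>v. (v,v) \<notin> star A c" by (auto simp: star_def)
  fix v assume "v \<in> A"
  then show "(c,v) \<in> (star A c)\<^sup>*"
    by (cases "v = c") (auto simp: star_def intro: r_into_rtrancl)
qed

lemma valid_GG:
  assumes n: "n \<ge> 4" shows "valid_graph n (GG n x)"
proof (cases "minc n x = {}")
  case True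
  have "0 \<in> {..<n}" using n by simp
  then show ?thesis using True star_props[of 0 "{..<n}"]
    by (intro valid_graphI[where r=0]) (auto simp: GG_def vertices_def)
next
  case False
  define S where "S = minc n x"
  define T where "T = majc n x"
  define b where "b = Min S"
  define a2 where "a2 = Min T"
  define a where "a = Max T"
  note mm = mm_basic[of n x, folded S_def T_def]
  have ne: "S \<noteq> {}" using False S_def by simp
  have "card S \<ge> 1" using ne mm by (simp add: Suc_le_eq card_gt_0_iff)
  then have cT: "card T \<ge> 2" using mm n by linarith
  then have Tne: "T \<noteq> {}" by auto
  have bS: "b \<in> S" using ne mm b_def by simp
  have a2T: "a2 \<in> T" using Tne mm a2_def by simp
  have aT: "a \<in> T" using Tne mm a_def by simp
  have aa2: "a \<noteq> a2"
  proof
    assume "a = a2"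
    then have "\<forall>v\<in>T. v = a" using mm a_def a2_def Tne T_def
      by (metis Max_ge Min_le antisym)
    then have "T \<subseteq> {a}" by auto
    then have "card T \<le> card {a}" by (intro card_mono) auto
    then show False using cT by simp
  qed
  have ab: "a \<noteq> b" using aT bS mm by auto
  have E: "GG n x = star S b \<union> star T a2 \<union> {(a,b),(b,a)}"
    using False unfolding GG_def S_def T_def a_def b_def a2_def by simp
  have SV: "S \<subseteq> vertices n" "T \<subseteq> vertices n" using mm by (auto simp: vertices_def)
  show ?thesis unfolding E
  proof (rule valid_graphI[where r=b])
    show "star S b \<union> star T a2 \<union> {(a, b), (b, a)} \<subseteq> vertices n \<times> vertices n"
      using star_props(1)[OF bS] star_props(1)[OF a2T] SV aT bS by blast
    show "sym (star S b \<union> star T a2 \<union> {(a, b), (b, a)})"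
      using star_props(2)[OF bS] star_props(2)[OF a2T] by (auto simp: sym_def)
    show "\<And>v. (v, v) \<notin> star S b \<union> star T a2 \<union> {(a, b), (b, a)}"
      using star_props(3)[OF bS] star_props(3)[OF a2T] ab by auto
    fix v assume v: "v \<in> vertices n"
    let ?E = "star S b \<union> star T a2 \<union> {(a, b), (b, a)}"
    have m1: "(star S b)\<^sup>* \<subseteq> ?E\<^sup>*" "(star T a2)\<^sup>* \<subseteq> ?E\<^sup>*" by (rule rtrancl_mono, blast)+
    show "(b, v) \<in> ?E\<^sup>*"
    proof (cases "v \<in> S")
      case True then show ?thesis using star_props(4)[OF bS] m1 by blast
    next
      case False
      then have vT: "v \<in> T" using v mm by (auto simp: vertices_def)
      have "(b,a) \<in> ?E\<^sup>*" by (intro r_into_rtrancl) simp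
      moreover have "(a,a2) \<in> ?E" using aT aa2 by (auto simp: star_def)
      moreover have "(a2,v) \<in> ?E\<^sup>*" using star_props(4)[OF a2T vT] m1 by blast
      ultimately show ?thesis by (meson rtrancl.rtrancl_into_rtrancl rtrancl_trans)
    qed
  qed
qed

lemma valid_advs: "n \<ge> 4 \<Longrightarrow> valid_adversary n (advs n)"
  unfolding valid_adversary_def advs_def using valid_GG by blast


lemma nbrs_sub: assumes "valid_graph n E" shows "nbrs E v \<subseteq> {..<n}"
proof -
  have "E \<subseteq> vertices n \<times> vertices n" using assms unfolding valid_graph_def by blast
  then show ?thesis unfolding nbrs_def vertices_def by blast
qed

lemma nbrs_fin: "valid_graph n E \<Longrightarrow> finite (nbrs E v)"
  by (rule finite_subset[OF nbrs_sub]) auto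

lemma nbrs_ne:
  assumes "valid_graph n E" "n \<ge> 2" "v < n" shows "nbrs E v \<noteq> {}"
proof -
  define u where "u = (if v = 0 then 1 else 0::nat)"
  have "u < n" "u \<noteq> v" using assms by (auto simp: u_def)
  moreover have "\<forall>u\<in>vertices n. \<forall>v\<in>vertices n. (u, v) \<in> E\<^sup>*"
    using assms(1) unfolding valid_graph_def by blast
  ultimately have "(v,u) \<in> E\<^sup>*" using assms(3) by (simp add: vertices_def)
  then obtain w where "(v,w) \<in> E" using \<open>u \<noteq> v\<close> by (cases rule: converse_rtranclE) auto
  then show ?thesis by (auto simp: nbrs_def)
qed

lemma node_update_const:
  assumes "finite (nbrs E v)" "nbrs E v \<noteq> {}" "\<And>u. u \<in> nbrs E v \<Longrightarrow> x u = x v"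
  shows "node_update E x v = return_pmf (x v)"
proof -
  have "map_pmf x (pmf_of_set (nbrs E v)) = map_pmf (\<lambda>_. x v) (pmf_of_set (nbrs E v))"
    using assms by (intro map_pmf_cong) auto
  then have "map_pmf x (pmf_of_set (nbrs E v)) = return_pmf (x v)" by simp
  then have "(\<lambda>b. if b then map_pmf x (pmf_of_set (nbrs E v)) else return_pmf (x v)) = (\<lambda>b. return_pmf (x v))"
    by auto
  then show ?thesis unfolding node_update_def by simp
qed

lemma set_node_update:
  assumes "finite (nbrs E v)" "nbrs E v \<noteq> {}"
  shows "set_pmf (node_update E x v) \<subseteq> insert (x v) (x ` nbrs E v)"
proof
  fix z assume "z \<in> set_pmf (node_update E x v)"
  then obtain c where "z \<in> set_pmf (if c then map_pmf x (pmf_of_set (nbrs E v)) else return_pmf (x v))"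
    unfolding node_update_def by auto
  then show "z \<in> insert (x v) (x ` nbrs E v)" using assms by (cases c) auto
qed

lemma set_voter_round:
  assumes "valid_graph n E" "n \<ge> 2" "y \<in> set_pmf (voter_round n E x)" "v < n"
  shows "y v \<in> insert (x v) (x ` nbrs E v)"
proof -
  have "y \<in> PiE_dflt (vertices n) 0 (set_pmf \<circ> node_update E x)"
    using assms(3) set_Pi_pmf[of "vertices n" 0 "node_update E x"]
    by (simp add: voter_round_def vertices_def)
  then have "y v \<in> set_pmf (node_update E x v)" using assms(4)
    by (auto simp: PiE_dflt_def vertices_def)
  then show ?thesis using set_node_update nbrs_fin[OF assms(1)] nbrs_ne[OF assms(1,2,4)] by blast
qed

lemma set_voter_round01:
  assumes "valid_graph n E" "n \<ge> 2" "y \<in> set_pmf (voter_round n E x)" "\<forall>v<n. x v \<in> {0,1}"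
  shows "\<forall>v<n. y v \<in> {0,1}"
proof (intro allI impI)
  fix v assume "v < n"
  then have "y v \<in> insert (x v) (x ` nbrs E v)" using set_voter_round assms by blast
  moreover have "\<forall>u\<in>nbrs E v. x u \<in> {0,1}" using assms(4) nbrs_sub[OF assms(1)] by auto
  ultimately show "y v \<in> {0,1}" using assms(4) \<open>v < n\<close> by auto
qed

definition DD :: "nat \<Rightarrow> real" where "DD j = 3^(j-1) / fact (j-1)"
definition Phi :: "nat \<Rightarrow> nat \<Rightarrow> real" where "Phi n k = (\<Sum>j\<in>{k<..n div 2}. DD j)"
definition mcount :: "nat \<Rightarrow> config \<Rightarrow> nat" where "mcount n x = card (minc n x)"

lemma DD_nonneg: "DD j \<ge> 0" by (simp add: DD_def)
lemma Phi_nonneg: "Phi n k \<ge> 0" by (simp add: Phi_def sum_nonneg DD_nonneg)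
lemma Phi_zero: "k \<ge> n div 2 \<Longrightarrow> Phi n k = 0" by (simp add: Phi_def)
lemma Phi_step: assumes "1 \<le> k" "k \<le> n div 2" shows "Phi n (k-1) = Phi n k + DD k"
proof -
  have "{k-1<..n div 2} = insert k {k<..n div 2}" using assms by auto
  then show ?thesis by (simp add: Phi_def add.commute)
qed
lemma Phi_anti: "k \<le> l \<Longrightarrow> Phi n l \<le> Phi n k"
  unfolding Phi_def by (intro sum_mono2) (auto simp: DD_nonneg)
lemma Phi0: assumes "n div 2 \<ge> 1" shows "Phi n 0 \<ge> 1"
proof -
  have "DD 1 \<le> Phi n 0" unfolding Phi_def using assms
    by (intro member_le_sum) (auto simp: DD_nonneg)
  then show ?thesis by (simp add: DD_def)
qed
lemma DD_succ: assumes "k \<ge> 1" shows "DD (k+1) = 3 * DD k / k"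
proof -
  obtain j where k: "k = Suc j" using assms by (cases k) auto
  show ?thesis by (simp add: DD_def k field_simps)
qed

lemma mcount_alt:
  assumes "\<forall>v<n. y v \<in> {0,1}" "ov \<in> {0,1}"
  shows "mcount n y = min (card {v. v<n \<and> y v = ov}) (n - card {v. v<n \<and> y v = ov})"
proof -
  have m: "mcount n y = min (card (cls1 n y)) (card (cls0 n y))"
    by (simp add: mcount_def minc_def)
  have s: "card (cls1 n y) + card (cls0 n y) = n" by (rule cls_basic)
  show ?thesis
  proof (cases "ov = 1")
    case True
    then show ?thesis using m s by (simp add: cls1_def)
  next
    case False
    then have "ov = 0" using assms by auto
    then have "{v. v<n \<and> y v = ov} = cls0 n y" using assms by (auto simp: cls0_def)
    then show ?thesis using m s by auto
  qed
qed


lemma arith_key: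
  fixes m P0 P1 P2 :: real
  assumes m: "m \<ge> 1"
  shows "8 * m * ((P1/2 + (P0 + (m-1)*P1)/(2*m))/2 + ((P1/2 + (P0 + (m-1)*P1)/(2*m)) + (P2/2 + (P1 + (m-1)*P2)/(2*m)))/4)
         = (6*m-2)*P1 + 3*P0 + (2*m-1)*P2"
  using m by (simp add: field_simps)

lemma arith_step:
  fixes m P0 P1 P2 d :: real
  assumes m: "m \<ge> 1" and
    c: "(\<exists>D1 D2. P0 = P1 + D1 \<and> P2 = P1 - D2 \<and> D2 = 3 * D1 / m \<and> D1 \<ge> 0 \<and> d \<ge> 0)
        \<or> (P1 = 0 \<and> 0 \<le> P0 \<and> P0 \<le> d \<and> 0 \<le> P2 \<and> P2 \<le> d)"
  shows "(P1/2 + (P0 + (m-1)*P1)/(2*m))/2 + ((P1/2 + (P0 + (m-1)*P1)/(2*m)) + (P2/2 + (P1 + (m-1)*P2)/(2*m)))/4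
         \<le> P1 + d" (is "?E \<le> _")
proof -
  have k: "8 * m * ?E = (6*m-2)*P1 + 3*P0 + (2*m-1)*P2" by (rule arith_key[OF m])
  have "8 * m * ?E \<le> 8 * m * (P1 + d)"
    using c
  proof
    assume "\<exists>D1 D2. P0 = P1 + D1 \<and> P2 = P1 - D2 \<and> D2 = 3 * D1 / m \<and> D1 \<ge> 0 \<and> d \<ge> 0"
    then obtain D1 D2 where h: "P0 = P1 + D1" "P2 = P1 - D2" "D2 = 3 * D1 / m" "D1 \<ge> 0" "d \<ge> 0" by blast
    have md: "m * D2 = 3 * D1" using h(3) m by simp
    have "D2 \<le> 3 * D1"
    proof -
      have "D2 \<ge> 0" using h(3,4) m by simp
      then have "1 * D2 \<le> m * D2" using m by (intro mult_right_mono) auto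
      then show ?thesis using md by linarith
    qed
    moreover have "(2*m-1)*P2 = (2*m-1)*P1 - 2*(m*D2) + D2" by (simp add: h(2) algebra_simps)
    ultimately have "(6*m-2)*P1 + 3*P0 + (2*m-1)*P2 \<le> 8 * m * P1"
      using h(1) md by (simp add: algebra_simps)
    moreover have "0 \<le> 8 * m * d" using m h(5) by simp
    ultimately show ?thesis using k by (simp add: algebra_simps)
  next
    assume h: "P1 = 0 \<and> 0 \<le> P0 \<and> P0 \<le> d \<and> 0 \<le> P2 \<and> P2 \<le> d"
    have "(2*m-1)*P2 \<le> (2*m-1)*d" using h m by (intro mult_left_mono) auto
    have "8 * m * ?E = 3*P0 + (2*m-1)*P2" using k h by simp
    also have "\<dots> \<le> (2*m+2)*d" using \<open>(2*m-1)*P2 \<le> (2*m-1)*d\<close> h by (simp add: algebra_simps)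
    also have "\<dots> \<le> (8*m)*d" using h m by (intro mult_right_mono) auto
    also have "\<dots> \<le> 8 * m * (P1 + d)" using h by simp
    finally show ?thesis .
  qed
  then show ?thesis using m by simp
qed


lemma GG_struct:
  assumes n: "n \<ge> 4" and ne: "minc n x \<noteq> {}"
  defines "S \<equiv> minc n x" and "T \<equiv> majc n x" and "b \<equiv> Min (minc n x)" and "a2 \<equiv> Min (majc n x)" and "a \<equiv> Max (majc n x)"
  shows "b \<in> S" "a \<in> T" "a2 \<in> T" "a \<noteq> a2" "a \<noteq> b" "a2 \<noteq> b"
    "GG n x = star S b \<union> star T a2 \<union> {(a,b),(b,a)}" "card S \<ge> 1" "card T \<ge> 2"
proof -
  note mm = mm_basic[of n x, folded S_def T_def]
  have ne': "S \<noteq> {}" using ne S_def by simp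
  show c1: "card S \<ge> 1" using ne' mm by (simp add: Suc_le_eq card_gt_0_iff)
  then show cT: "card T \<ge> 2" using mm n by linarith
  then have Tne: "T \<noteq> {}" by auto
  show bS: "b \<in> S" using ne' mm b_def S_def by simp
  show a2T: "a2 \<in> T" using Tne mm a2_def T_def by simp
  show aT: "a \<in> T" using Tne mm a_def T_def by simp
  show aa2: "a \<noteq> a2"
  proof
    assume "a = a2"
    then have "\<forall>v\<in>T. v = a" using mm a_def a2_def Tne T_def
      by (metis Max_ge Min_le antisym)
    then have "T \<subseteq> {a}" by auto
    then have "card T \<le> card {a}" by (intro card_mono) auto
    then show False using cT by simp
  qed
  show "a \<noteq> b" using aT bS mm by auto
  show "a2 \<noteq> b" using a2T bS mm by auto
  show "GG n x = star S b \<union> star T a2 \<union> {(a,b),(b,a)}"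
    using ne unfolding GG_def S_def T_def a_def b_def a2_def by simp
qed

lemma cls_vals:
  assumes inv: "\<forall>v<n. x v \<in> {0,1}"
  shows "\<And>u v. u \<in> minc n x \<Longrightarrow> v \<in> minc n x \<Longrightarrow> x u = x v"
    "\<And>u v. u \<in> majc n x \<Longrightarrow> v \<in> majc n x \<Longrightarrow> x u = x v"
    "\<And>u v. u \<in> minc n x \<Longrightarrow> v \<in> majc n x \<Longrightarrow> x u \<noteq> x v"
    "\<And>u. u \<in> minc n x \<Longrightarrow> x u \<in> {0,1}"
    "\<And>u. u \<in> majc n x \<Longrightarrow> x u \<in> {0,1}"
proof -
  have c1: "\<And>v. v \<in> cls1 n x \<Longrightarrow> x v = 1" by (simp add: cls1_def)
  have c0: "\<And>v. v \<in> cls0 n x \<Longrightarrow> x v = 0" using inv by (auto simp: cls0_def)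
  have s1: "cls1 n x \<subseteq> {..<n}" "cls0 n x \<subseteq> {..<n}" by (auto simp: cls1_def cls0_def)
  show "\<And>u v. u \<in> minc n x \<Longrightarrow> v \<in> minc n x \<Longrightarrow> x u = x v"
    "\<And>u v. u \<in> majc n x \<Longrightarrow> v \<in> majc n x \<Longrightarrow> x u = x v"
    "\<And>u v. u \<in> minc n x \<Longrightarrow> v \<in> majc n x \<Longrightarrow> x u \<noteq> x v"
    "\<And>u. u \<in> minc n x \<Longrightarrow> x u \<in> {0,1}"
    "\<And>u. u \<in> majc n x \<Longrightarrow> x u \<in> {0,1}"
    unfolding minc_def majc_def using c1 c0 by (auto split: if_splits)
qed

lemma nbrs_GG:
  assumes "S \<inter> T = {}" "b \<in> S" "a \<in> T" "a2 \<in> T" "a \<noteq> a2"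
  defines "E \<equiv> star S b \<union> star T a2 \<union> {(a,b),(b,a)}"
  shows "nbrs E a = {a2, b}" "nbrs E b = insert a (S - {b})"
    "\<And>v. v \<in> S \<Longrightarrow> v \<noteq> b \<Longrightarrow> nbrs E v \<subseteq> S"
    "\<And>v. v \<in> T \<Longrightarrow> v \<noteq> a \<Longrightarrow> nbrs E v \<subseteq> T"
  using assms by (auto simp: nbrs_def star_def)

lemma mcount_cong: "(\<And>v. v < n \<Longrightarrow> y v = x v) \<Longrightarrow> mcount n y = mcount n x"
proof -
  assume h: "\<And>v. v < n \<Longrightarrow> y v = x v"
  have "cls1 n y = cls1 n x" "cls0 n y = cls0 n x" using h by (auto simp: cls1_def cls0_def)
  then show ?thesis by (simp add: mcount_def minc_def)
qed


lemma one_step_cons: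
  assumes n: "n \<ge> 4" and inv: "\<forall>v<n. x v \<in> {0,1}" and mc: "minc n x = {}"
  shows "(\<integral>\<^sup>+y. ennreal (Phi n (mcount n y)) \<partial>voter_round n (GG n x) x)
           \<le> ennreal (Phi n (mcount n x) + DD (n div 2))"
proof -
  define E where "E = GG n x"
  have vE: "valid_graph n E" using valid_GG[OF n] E_def by simp
  have same: "\<And>u v. u < n \<Longrightarrow> v < n \<Longrightarrow> x u = x v"
  proof -
    fix u v assume uv: "u < n" "v < n"
    have "cls1 n x = {} \<or> cls0 n x = {}" using mc unfolding minc_def by presburger
    then show "x u = x v"
    proof
      assume "cls1 n x = {}"
      then have "x u \<noteq> 1" "x v \<noteq> 1" using uv by (auto simp: cls1_def)
      moreover have "x u \<in> {0,1}" "x v \<in> {0,1}" using inv uv by blast+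
      ultimately have "x u = 0" "x v = 0" by simp_all
      then show ?thesis by simp
    next
      assume "cls0 n x = {}"
      then have "x u = 1" "x v = 1" using uv by (auto simp: cls0_def)
      then show ?thesis by simp
    qed
  qed
  have nu: "\<And>v. v \<in> vertices n \<Longrightarrow> node_update E x v = return_pmf (x v)"
  proof -
    fix v assume v: "v \<in> vertices n"
    show "node_update E x v = return_pmf (x v)"
    proof (rule node_update_const)
      show "finite (nbrs E v)" by (rule nbrs_fin[OF vE])
      show "nbrs E v \<noteq> {}" using nbrs_ne[OF vE] n v by (simp add: vertices_def)
      fix u assume "u \<in> nbrs E v"
      then have "u < n" using nbrs_sub[OF vE] by auto
      then show "x u = x v" using same[of u v] v by (simp add: vertices_def)
    qed
  qed
  have "voter_round n E x = Pi_pmf (vertices n) 0 (\<lambda>v. return_pmf (x v))"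
    unfolding voter_round_def using nu by (intro Pi_pmf_cong) simp_all
  also have "\<dots> = return_pmf (\<lambda>v. if v \<in> vertices n then x v else 0)"
    by (simp add: vertices_def)
  finally have vr: "voter_round n E x = return_pmf (\<lambda>v. if v \<in> vertices n then x v else 0)" .
  have "mcount n (\<lambda>v. if v \<in> vertices n then x v else 0) = mcount n x"
    by (rule mcount_cong) (simp add: vertices_def)
  then show ?thesis unfolding E_def[symmetric] vr
    by (simp add: Phi_nonneg DD_nonneg)
qed


lemma one_step_main:
  assumes n: "n \<ge> 4" and inv: "\<forall>v<n. x v \<in> {0,1}" and mc: "minc n x \<noteq> {}"
  shows "(\<integral>\<^sup>+y. ennreal (Phi n (mcount n y)) \<partial>voter_round n (GG n x) x)
           \<le> ennreal (Phi n (mcount n x) + DD (n div 2))"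
proof -
  define S where "S = minc n x"
  define T where "T = majc n x"
  define b where "b = Min (minc n x)"
  define a2 where "a2 = Min (majc n x)"
  define a where "a = Max (majc n x)"
  note st = GG_struct[OF n mc, folded S_def T_def b_def a2_def a_def]
  note mm = mm_basic[of n x, folded S_def T_def]
  note cv = cls_vals[OF inv, folded S_def T_def]
  define E where "E = GG n x"
  have vE: "valid_graph n E" using valid_GG[OF n] E_def by simp
  have ST: "S \<inter> T = {}" using mm by simp
  have Edef: "E = star S b \<union> star T a2 \<union> {(a,b),(b,a)}" using st E_def by simp
  note nb = nbrs_GG[OF ST st(1,2,3,4), folded Edef]
  define ov where "ov = x b"
  define q where "q = x a"
  have xS: "\<And>v. v \<in> S \<Longrightarrow> x v = ov" using cv(1) st(1) ov_def by blast
  have xT: "\<And>v. v \<in> T \<Longrightarrow> x v = q" using cv(2) st(2) q_def by blast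
  have qo: "q \<noteq> ov" using cv(3)[OF st(1) st(2)] ov_def q_def by simp
  have o01: "ov \<in> {0,1}" using cv(4)[OF st(1)] ov_def by simp
  have q01: "q \<in> {0,1}" using cv(5)[OF st(2)] q_def by simp
  define m where "m = card S"
  have m1: "m \<ge> 1" using st m_def by simp
  have mM: "m \<le> n div 2" using mm m_def by simp
  have mcx: "mcount n x = m" by (simp add: mcount_def m_def S_def)
  have finS: "finite S" using mm by simp
  define R where "R = {..<n} - {a, b}"
  have aV: "a < n" "b < n" using mm st by auto
  have V: "vertices n = insert a (insert b R)" using aV by (auto simp: R_def vertices_def)
  have abR: "a \<notin> insert b R" "b \<notin> R" "finite R" using st by (auto simp: R_def)
  define p where "p = node_update E x"
  have pR: "\<And>v. v \<in> R \<Longrightarrow> p v = return_pmf (x v)"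
  proof -
    fix v assume vR: "v \<in> R"
    then have v: "v < n" "v \<noteq> a" "v \<noteq> b" by (auto simp: R_def)
    show "p v = return_pmf (x v)" unfolding p_def
    proof (rule node_update_const)
      show "finite (nbrs E v)" by (rule nbrs_fin[OF vE])
      show "nbrs E v \<noteq> {}" using nbrs_ne[OF vE] n v by simp
      fix u assume u: "u \<in> nbrs E v"
      have "v \<in> S \<or> v \<in> T" using mm v by auto
      then show "x u = x v"
      proof
        assume "v \<in> S"
        then have "u \<in> S" using nb(3)[of v] u v by auto
        then show ?thesis using xS[of u] xS[of v] \<open>v \<in> S\<close> by simp
      next
        assume "v \<in> T"
        then have "u \<in> T" using nb(4)[of v] u v by auto
        then show ?thesis using xT[of u] xT[of v] \<open>v \<in> T\<close> by simp
      qed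
    qed
  qed
  define r where "r = (\<lambda>v. if v \<in> R then x v else 0::nat)"
  have PR: "Pi_pmf R 0 p = return_pmf r"
  proof -
    have "Pi_pmf R 0 p = Pi_pmf R 0 (\<lambda>v. return_pmf (x v))"
      using pR by (intro Pi_pmf_cong) simp_all
    then show ?thesis using abR(3) by (simp add: r_def)
  qed
  have vr: "voter_round n E x = map_pmf (\<lambda>(y,f). f(a:=y)) (pair_pmf (p a)
              (map_pmf (\<lambda>(y,f). f(b:=y)) (pair_pmf (p b) (return_pmf r))))"
    unfolding voter_round_def V p_def[symmetric]
    using abR by (simp add: Pi_pmf_insert PR)
  have decomp: "\<And>f. (\<integral>\<^sup>+y. f y \<partial>voter_round n E x) = (\<integral>\<^sup>+u. \<integral>\<^sup>+w. f ((r(b:=w))(a:=u)) \<partial>p b \<partial>p a)"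
    unfolding vr by (simp add: nn_integral_pair_pmf' case_prod_beta)
  define Fy where "Fy = (\<lambda>u w. Phi n (mcount n ((r(b:=w))(a:=u))))"
  define F where "F = (\<lambda>k. Phi n (min k (n-k)))"
  have Cset: "\<And>u w. {v. v<n \<and> ((r(b:=w))(a:=u)) v = ov} =
      (S - {b}) \<union> (if w = ov then {b} else {}) \<union> (if u = ov then {a} else {})"
  proof -
    fix u w
    show "{v. v<n \<and> ((r(b:=w))(a:=u)) v = ov} =
      (S - {b}) \<union> (if w = ov then {b} else {}) \<union> (if u = ov then {a} else {})"
    proof (intro set_eqI iffI)
      fix v assume "v \<in> {v. v<n \<and> ((r(b:=w))(a:=u)) v = ov}"
      then have v: "v < n" "((r(b:=w))(a:=u)) v = ov" by auto
      show "v \<in> (S - {b}) \<union> (if w = ov then {b} else {}) \<union> (if u = ov then {a} else {})"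
      proof (cases "v = a \<or> v = b")
        case True then show ?thesis using v st by auto
      next
        case False
        then have "v \<in> R" using v by (simp add: R_def)
        then have "x v = ov" using v False by (simp add: r_def)
        moreover have "v \<in> S \<or> v \<in> T" using mm v by auto
        ultimately have "v \<in> S" using xT[of v] qo by auto
        then show ?thesis using False by auto
      qed
    next
      fix v assume v: "v \<in> (S - {b}) \<union> (if w = ov then {b} else {}) \<union> (if u = ov then {a} else {})"
      show "v \<in> {v. v<n \<and> ((r(b:=w))(a:=u)) v = ov}"
      proof (cases "v = a \<or> v = b")
        case True then show ?thesis using v st aV mm by (auto split: if_splits)
      next
        case False
        then have "v \<in> S" using v by (auto split: if_splits)
        then have "v < n" "x v = ov" using mm xS by auto
        then show ?thesis using False by (simp add: r_def R_def)
      qed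
    qed
  qed
  have y01: "\<And>u w. u \<in> {0,1} \<Longrightarrow> w \<in> {0,1} \<Longrightarrow> \<forall>v<n. ((r(b:=w))(a:=u)) v \<in> {0,1}"
    using inv by (auto simp: r_def)
  have mcy: "\<And>u w. u \<in> {0,1} \<Longrightarrow> w \<in> {0,1} \<Longrightarrow> Fy u w =
      F (card ((S - {b}) \<union> (if w = ov then {b} else {}) \<union> (if u = ov then {a} else {})))"
    unfolding Fy_def F_def using mcount_alt[OF y01 o01] Cset by presburger
  have aS: "a \<notin> S" using st mm by auto
  have cSb: "card (S - {b}) = m - 1" using st finS m_def by simp
  have Fyv: "Fy q ov = F m" "Fy ov ov = F (m+1)" "Fy q q = F (m-1)" "Fy ov q = F m"
  proof -
    have e1: "(S - {b}) \<union> {b} = S" using st by auto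
    show "Fy q ov = F m" using mcy[OF q01 o01] qo e1 by (simp add: m_def)
    have "card (insert a S) = m + 1" using aS finS m_def by simp
    then show "Fy ov ov = F (m+1)" using mcy[OF o01 o01] e1 by simp
    show "Fy q q = F (m-1)" using mcy[OF q01 q01] qo cSb by simp
    have "card (insert a (S - {b})) = m" using aS finS cSb m1 by simp
    then show "Fy ov q = F m" using mcy[OF o01 q01] qo by simp
  qed
  define H where "H = (\<lambda>u. Fy u ov / 2 + (Fy u q + (real m - 1) * Fy u ov) / (2 * real m))"
  have Fy0: "\<And>u w. Fy u w \<ge> 0" by (simp add: Fy_def Phi_nonneg)
  have inner: "\<And>u. (\<integral>\<^sup>+w. ennreal (Fy u w) \<partial>p b) = ennreal (H u)"
  proof -
    fix u
    have fb: "finite (nbrs E b)" "nbrs E b \<noteq> {}" using nb(2) finS by auto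
    have "(\<Sum>z\<in>nbrs E b. Fy u (x z)) = Fy u (x a) + (\<Sum>z\<in>S - {b}. Fy u (x z))"
      unfolding nb(2) using aS finS by (simp add: sum.insert)
    also have "(\<Sum>z\<in>S - {b}. Fy u (x z)) = (\<Sum>z\<in>S - {b}. Fy u ov)"
      by (intro sum.cong) (auto simp: xS)
    also have "\<dots> = (real m - 1) * Fy u ov" using cSb m1 by (simp add: of_nat_diff)
    finally have sm: "(\<Sum>z\<in>nbrs E b. Fy u (x z)) = Fy u q + (real m - 1) * Fy u ov"
      by (simp add: q_def)
    have cb: "card (nbrs E b) = m" unfolding nb(2) using aS finS cSb m1 by simp
    show "(\<integral>\<^sup>+w. ennreal (Fy u w) \<partial>p b) = ennreal (H u)"
      unfolding p_def using nn_int_node_update[OF fb, of "Fy u" x] Fy0 sm cb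
      by (simp add: H_def ov_def)
  qed
  have H0: "\<And>u. H u \<ge> 0" unfolding H_def using Fy0 m1
    by (intro add_nonneg_nonneg divide_nonneg_nonneg mult_nonneg_nonneg) auto
  have outer: "(\<integral>\<^sup>+u. ennreal (H u) \<partial>p a) = ennreal (H q / 2 + (H q + H ov) / 4)"
  proof -
    have fa: "finite (nbrs E a)" "nbrs E a \<noteq> {}" using nb(1) by auto
    have a2b: "a2 \<noteq> b" using st by simp
    have sm: "(\<Sum>z\<in>nbrs E a. H (x z)) = H q + H ov"
      unfolding nb(1) using a2b xT[OF st(3)] by (simp add: ov_def)
    have ca: "card (nbrs E a) = 2" unfolding nb(1) using a2b by simp
    show ?thesis
      unfolding p_def using nn_int_node_update[OF fa, of H x] H0 sm ca
      by (simp add: q_def)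
  qed
  have ar: "H q / 2 + (H q + H ov) / 4 \<le> Phi n m + DD (n div 2)"
  proof -
    define M where "M = n div 2"
    have h1: "m \<le> n - m" "m - 1 \<le> n - (m - 1)" using mM by auto
    have Fm: "F m = Phi n m" using h1 unfolding F_def by (simp add: min_def)
    have Fm1: "F (m-1) = Phi n (m-1)" using h1 unfolding F_def by (simp only: min_def if_True)
    have c: "(\<exists>D1 D2. F (m-1) = F m + D1 \<and> F (m+1) = F m - D2 \<and> D2 = 3 * D1 / real m \<and> D1 \<ge> 0 \<and> DD M \<ge> 0)
        \<or> (F m = 0 \<and> 0 \<le> F (m-1) \<and> F (m-1) \<le> DD M \<and> 0 \<le> F (m+1) \<and> F (m+1) \<le> DD M)"
    proof (cases "m < M")
      case True
      have "m + 1 \<le> n - (m+1)" using True M_def by auto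
      then have Fp: "F (m+1) = Phi n (m+1)" unfolding F_def by (simp only: min_def if_True)
      have s1: "Phi n (m-1) = Phi n m + DD m" using Phi_step[of m n] m1 mM by simp
      have s2: "Phi n m = Phi n (m+1) + DD (m+1)" using Phi_step[of "m+1" n] True M_def by simp
      have "F (m-1) = F m + DD m \<and> F (m+1) = F m - DD (m+1) \<and> DD (m+1) = 3 * DD m / real m \<and> DD m \<ge> 0 \<and> DD M \<ge> 0"
        using Fm Fm1 Fp s1 s2 DD_succ[OF m1] DD_nonneg by simp
      then show ?thesis by blast
    next
      case False
      then have mM': "m = M" using mM M_def by simp
      have P1: "Phi n m = 0" using mM' M_def Phi_zero by simp
      have s1: "Phi n (m-1) = Phi n m + DD m" using Phi_step[of m n] m1 mM by simp
      have "min (m+1) (n-(m+1)) \<ge> m - 1" using mM' M_def by simp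
      then have "F (m+1) \<le> Phi n (m-1)" unfolding F_def by (rule Phi_anti)
      then have "F m = 0 \<and> 0 \<le> F (m-1) \<and> F (m-1) \<le> DD M \<and> 0 \<le> F (m+1) \<and> F (m+1) \<le> DD M"
        using Fm Fm1 P1 s1 mM' F_def Phi_nonneg DD_nonneg by simp
      then show ?thesis by blast
    qed
    have Hq: "H q = F m / 2 + (F (m-1) + (real m - 1) * F m) / (2 * real m)"
      using Fyv by (simp add: H_def)
    have Ho: "H ov = F (m+1) / 2 + (F m + (real m - 1) * F (m+1)) / (2 * real m)"
      using Fyv by (simp add: H_def)
    have "H q / 2 + (H q + H ov) / 4 \<le> F m + DD M"
      unfolding Hq Ho by (rule arith_step) (use m1 c in auto)
    then show ?thesis using Fm M_def by simp
  qed
  have "(\<integral>\<^sup>+y. ennreal (Phi n (mcount n y)) \<partial>voter_round n E x) = ennreal (H q / 2 + (H q + H ov) / 4)"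
    unfolding decomp using inner outer by (simp add: Fy_def)
  also have "\<dots> \<le> ennreal (Phi n (mcount n x) + DD (n div 2))"
    using ar mcx by (simp add: ennreal_leI)
  finally show ?thesis unfolding E_def .
qed


lemma one_step:
  assumes n: "n \<ge> 4" and inv: "\<forall>v<n. x v \<in> {0,1}"
  shows "(\<integral>\<^sup>+y. ennreal (Phi n (mcount n y)) \<partial>voter_round n (GG n x) x)
           \<le> ennreal (Phi n (mcount n x) + DD (n div 2))"
  using one_step_cons[OF n inv] one_step_main[OF n inv] by blast

definition Psi :: "nat \<Rightarrow> config list \<Rightarrow> real" where
  "Psi n h = (if (\<exists>s<length h. consensus n (h!s)) then 1 else Phi n (mcount n (last h)))"

lemma Psi_nonneg: "Psi n h \<ge> 0" by (simp add: Psi_def Phi_nonneg)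

lemma hist_supp:
  assumes n: "n \<ge> 4" and inv: "\<forall>v<n. x0 v \<in> {0,1}"
  shows "h \<in> set_pmf (history n (advs n) x0 t) \<Longrightarrow> length h = Suc t \<and> (\<forall>v<n. last h v \<in> {0,1})"
proof (induction t arbitrary: h)
  case 0
  then show ?case using inv by simp
next
  case (Suc t)
  then obtain h' y where h': "h' \<in> set_pmf (history n (advs n) x0 t)" "h = h' @ [y]"
    "y \<in> set_pmf (voter_round n (advs n h') (last h'))" by auto
  have IH: "length h' = Suc t" "\<forall>v<n. last h' v \<in> {0,1}" using Suc.IH[OF h'(1)] by auto
  have "\<forall>v<n. y v \<in> {0,1}"
    using set_voter_round01[OF _ _ h'(3) IH(2)] valid_GG[OF n] n by (simp add: advs_def)
  then show ?case using IH h' by simp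
qed

lemma cons_mc:
  assumes "consensus n y" "n \<ge> 1" shows "mcount n y = 0"
proof -
  have all: "\<And>v. v < n \<Longrightarrow> y v = y 0"
  proof -
    fix v assume "v < n"
    moreover have "0 < n" using assms by simp
    ultimately show "y v = y 0" using assms(1) unfolding consensus_def vertices_def by blast
  qed
  show ?thesis
  proof (cases "y 0 = 1")
    case True
    have "cls0 n y = {}"
    proof (rule equals0I)
      fix v assume "v \<in> cls0 n y" then have "v < n" "y v \<noteq> 1" by (auto simp: cls0_def)
      then show False using all[of v] True by simp
    qed
    then show ?thesis by (simp add: mcount_def minc_def)
  next
    case False
    have "cls1 n y = {}"
    proof (rule equals0I)
      fix v assume "v \<in> cls1 n y" then have "v < n" "y v = 1" by (auto simp: cls1_def)
      then show False using all[of v] False by simp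
    qed
    then show ?thesis by (simp add: mcount_def minc_def)
  qed
qed

lemma Psi_step:
  assumes n: "n \<ge> 4" and inv: "\<forall>v<n. last h v \<in> {0,1}" and hne: "h \<noteq> []"
  shows "(\<integral>\<^sup>+y. ennreal (Psi n (h @ [y])) \<partial>voter_round n (advs n h) (last h))
           \<le> ennreal (Psi n h + DD (n div 2))"
proof (cases "\<exists>s<length h. consensus n (h!s)")
  case True
  then have "\<And>y. Psi n (h @ [y]) = 1"
  proof -
    fix y
    obtain s where s: "s < length h" "consensus n (h!s)" using True by blast
    then have "s < length (h @ [y])" "consensus n ((h @ [y])!s)" by (simp_all add: nth_append)
    then show "Psi n (h @ [y]) = 1" unfolding Psi_def by auto
  qed
  moreover have "Psi n h = 1" using True by (simp add: Psi_def)
  ultimately show ?thesis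
    using measure_pmf.emeasure_space_1 by (simp add: DD_nonneg)
next
  case False
  have le: "\<And>y. Psi n (h @ [y]) \<le> Phi n (mcount n y)"
  proof -
    fix y
    show "Psi n (h @ [y]) \<le> Phi n (mcount n y)"
    proof (cases "\<exists>s<length (h @ [y]). consensus n ((h @ [y])!s)")
      case True
      then obtain s where s: "s < Suc (length h)" "consensus n ((h @ [y])!s)" by auto
      have "s = length h"
      proof (rule ccontr)
        assume "s \<noteq> length h"
        then have "s < length h" using s by simp
        then show False using False s by (simp add: nth_append)
      qed
      then have "consensus n y" using s by simp
      then have "mcount n y = 0" using cons_mc n by simp
      moreover have "Phi n 0 \<ge> 1" using Phi0 n by simp
      ultimately show ?thesis using True by (simp add: Psi_def)
    next
      case False
      then show ?thesis unfolding Psi_def by (simp only: if_False) simp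
    qed
  qed
  have "(\<integral>\<^sup>+y. ennreal (Psi n (h @ [y])) \<partial>voter_round n (advs n h) (last h))
        \<le> (\<integral>\<^sup>+y. ennreal (Phi n (mcount n y)) \<partial>voter_round n (GG n (last h)) (last h))"
    unfolding advs_def by (intro nn_integral_mono ennreal_leI le)
  also have "\<dots> \<le> ennreal (Phi n (mcount n (last h)) + DD (n div 2))"
    by (rule one_step[OF n inv])
  also have "Phi n (mcount n (last h)) = Psi n h" unfolding Psi_def using False by (subst if_not_P) auto
  finally show ?thesis .
qed


lemma hist_bound:
  assumes n: "n \<ge> 4" and inv: "\<forall>v<n. x0 v \<in> {0,1}"
  shows "(\<integral>\<^sup>+h. ennreal (Psi n h) \<partial>history n (advs n) x0 t) \<le> ennreal (Psi n [x0] + real t * DD (n div 2))"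
proof (induction t)
  case 0
  then show ?case by (simp add: Psi_nonneg)
next
  case (Suc t)
  let ?d = "DD (n div 2)"
  let ?H = "history n (advs n) x0 t"
  have "(\<integral>\<^sup>+h. ennreal (Psi n h) \<partial>history n (advs n) x0 (Suc t))
      = (\<integral>\<^sup>+h. (\<integral>\<^sup>+y. ennreal (Psi n (h @ [y])) \<partial>voter_round n (advs n h) (last h)) \<partial>?H)"
    by (simp only: history.simps nn_integral_bind_pmf nn_integral_map_pmf)
  also have "\<dots> \<le> (\<integral>\<^sup>+h. ennreal (Psi n h + ?d) \<partial>?H)"
  proof (rule nn_integral_mono_AE)
    show "AE h in measure_pmf ?H. (\<integral>\<^sup>+y. ennreal (Psi n (h @ [y])) \<partial>voter_round n (advs n h) (last h))
           \<le> ennreal (Psi n h + ?d)"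
      unfolding AE_measure_pmf_iff
    proof
      fix h assume "h \<in> set_pmf ?H"
      then have l: "length h = Suc t" and i: "\<forall>v<n. last h v \<in> {0,1}" using hist_supp[OF n inv] by auto
      then have "h \<noteq> []" by auto
      then show "(\<integral>\<^sup>+y. ennreal (Psi n (h @ [y])) \<partial>voter_round n (advs n h) (last h)) \<le> ennreal (Psi n h + ?d)"
        using Psi_step[OF n i] by blast
    qed
  qed
  also have "\<dots> = (\<integral>\<^sup>+h. ennreal (Psi n h) \<partial>?H) + ennreal ?d"
  proof -
    have "(\<integral>\<^sup>+h. ennreal (Psi n h + ?d) \<partial>?H) = (\<integral>\<^sup>+h. ennreal (Psi n h) + ennreal ?d \<partial>?H)"
      by (intro nn_integral_cong ennreal_plus Psi_nonneg DD_nonneg)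
    also have "\<dots> = (\<integral>\<^sup>+h. ennreal (Psi n h) \<partial>?H) + (\<integral>\<^sup>+h. ennreal ?d \<partial>?H)"
      by (rule nn_integral_add) simp_all
    also have "(\<integral>\<^sup>+h. ennreal ?d \<partial>?H) = ennreal ?d"
      by (simp add: measure_pmf.emeasure_space_1)
    finally show ?thesis .
  qed
  also have "\<dots> \<le> ennreal (Psi n [x0] + real t * ?d) + ennreal ?d"
    using Suc.IH by (rule add_right_mono)
  also have "\<dots> = ennreal (Psi n [x0] + real (Suc t) * ?d)"
  proof -
    have "ennreal (Psi n [x0] + real t * ?d) + ennreal ?d = ennreal (Psi n [x0] + real t * ?d + ?d)"
      by (rule ennreal_plus[symmetric]) (simp_all add: Psi_nonneg DD_nonneg)
    also have "Psi n [x0] + real t * ?d + ?d = Psi n [x0] + real (Suc t) * ?d"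
      by (simp add: algebra_simps)
    finally show ?thesis .
  qed
  finally show ?case .
qed


definition xinit :: "nat \<Rightarrow> config" where "xinit n = (\<lambda>v. if v < n div 2 then 1 else 0)"

lemma xinit_props:
  assumes n: "n \<ge> 4"
  shows "\<forall>v<n. xinit n v \<in> {0,1}" "mcount n (xinit n) = n div 2" "\<not> consensus n (xinit n)"
proof -
  show "\<forall>v<n. xinit n v \<in> {0,1}" by (simp add: xinit_def)
  have c1: "cls1 n (xinit n) = {..<n div 2}" by (auto simp: cls1_def xinit_def)
  have c0: "cls0 n (xinit n) = {n div 2..<n}" by (auto simp: cls0_def xinit_def)
  have "card {..<n div 2} \<le> card {n div 2..<n}" by simp
  then show "mcount n (xinit n) = n div 2" by (simp add: mcount_def minc_def c1 c0)
  have "xinit n 0 = 1" "xinit n (n-1) = 0" using n by (auto simp: xinit_def)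
  moreover have "0 \<in> vertices n" "n - 1 \<in> vertices n" using n by (auto simp: vertices_def)
  ultimately show "\<not> consensus n (xinit n)" unfolding consensus_def by (metis zero_neq_one)
qed

lemma prob_bound:
  assumes n: "n \<ge> 4"
  shows "prob_not_consensus_by n (advs n) (xinit n) t \<ge> 1 - real t * DD (n div 2)"
proof -
  note xp = xinit_props[OF n]
  let ?H = "history n (advs n) (xinit n) t"
  define A where "A = {h. \<exists>s\<le>t. consensus n (h!s)}"
  have P0: "Psi n [xinit n] = 0"
    using xp by (simp add: Psi_def Phi_zero)
  have "emeasure (measure_pmf ?H) A = (\<integral>\<^sup>+h. indicator A h \<partial>?H)" by simp
  also have "\<dots> \<le> (\<integral>\<^sup>+h. ennreal (Psi n h) \<partial>?H)"
  proof (rule nn_integral_mono_AE)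
    show "AE h in measure_pmf ?H. indicator A h \<le> ennreal (Psi n h)"
      unfolding AE_measure_pmf_iff
    proof
      fix h assume "h \<in> set_pmf ?H"
      then have l: "length h = Suc t" using hist_supp[OF n xp(1)] by blast
      show "indicator A h \<le> ennreal (Psi n h)"
      proof (cases "h \<in> A")
        case True
        then obtain s where "s \<le> t" "consensus n (h!s)" by (auto simp: A_def)
        then have "\<exists>s<length h. consensus n (h!s)" using l by (intro exI[of _ s]) simp
        then show ?thesis using True by (simp add: Psi_def)
      qed simp
    qed
  qed
  also have "\<dots> \<le> ennreal (real t * DD (n div 2))" using hist_bound[OF n xp(1), of t] P0 by simp
  finally have "emeasure (measure_pmf ?H) A \<le> ennreal (real t * DD (n div 2))" .
  then have mA: "measure (measure_pmf ?H) A \<le> real t * DD (n div 2)"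
    by (simp add: measure_pmf.emeasure_eq_measure DD_nonneg)
  have "{h. \<forall>s\<le>t. \<not> consensus n (h!s)} = UNIV - A" by (auto simp: A_def)
  then have "prob_not_consensus_by n (advs n) (xinit n) t = 1 - measure (measure_pmf ?H) A"
    unfolding prob_not_consensus_by_def using measure_pmf.prob_compl[of A ?H] by simp
  then show ?thesis using mA by simp
qed


lemma e_bound: assumes "k \<ge> 1" shows "(1 + 1 / real k) ^ k \<le> 4"
proof -
  have "(1 + 1 / of_nat k) ^ k \<le> exp (1::real)"
    by (rule exp_ge_one_plus_x_over_n_power_n) (use assms in auto)
  then have "(1 + 1 / real k) ^ k \<le> exp 1" by simp
  also have "exp (1::real) = exp (1/2) * exp (1/2)" by (simp flip: exp_add)
  also have "exp (1/2::real) \<le> 2"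
    using exp_bound_half[of "1/2::real"] by simp
  then have "exp (1/2::real) * exp (1/2) \<le> 2 * 2" by (intro mult_mono) auto
  finally show ?thesis by simp
qed

lemma fact_bound: "real k ^ k \<le> 4 ^ k * fact k"
proof (induction k)
  case 0 then show ?case by simp
next
  case (Suc k)
  show ?case
  proof (cases "k = 0")
    case True then show ?thesis by simp
  next
    case False
    have "real (Suc k) = real k * (1 + 1 / real k)" using False by (simp add: field_simps)
    then have "real (Suc k) ^ k = (real k * (1 + 1 / real k)) ^ k" by (simp only:)
    also have "\<dots> = real k ^ k * (1 + 1 / real k) ^ k" by (simp add: power_mult_distrib)
    also have "\<dots> \<le> real k ^ k * 4" using e_bound[of k] False by (intro mult_left_mono) auto
    finally have h: "real (Suc k) ^ k \<le> 4 * real k ^ k" by simp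
    have "real (Suc k) ^ Suc k = real (Suc k) * real (Suc k) ^ k" by simp
    also have "\<dots> \<le> real (Suc k) * (4 * real k ^ k)" using h by (intro mult_left_mono) auto
    also have "\<dots> \<le> real (Suc k) * (4 * (4 ^ k * fact k))" using Suc.IH by (intro mult_left_mono) auto
    also have "\<dots> = 4 ^ Suc k * fact (Suc k)" by (simp add: algebra_simps)
    finally show ?thesis .
  qed
qed

lemma final_num:
  assumes n: "n \<ge> 400"
  shows "(1/8) * (real n / 40) powr (real n / 40) \<le> 1 / (4 * DD (n div 2)) - 1/2"
proof -
  define k where "k = n div 2 - 1"
  have Mk: "n div 2 = Suc k" using n k_def by simp
  have kn: "real k \<ge> real n / 2 - 2" using n k_def by linarith
  have DDk: "DD (n div 2) = 3 ^ k / fact k" by (simp add: DD_def Mk)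
  have "(12::real) ^ k = 4 ^ k * 3 ^ k" by (simp flip: power_mult_distrib)
  then have "(real k / 12) ^ k = real k ^ k / (4 ^ k * 3 ^ k)" by (simp add: power_divide)
  also have "\<dots> \<le> (4 ^ k * fact k) / (4 ^ k * 3 ^ k)" using fact_bound[of k] by (intro divide_right_mono) auto
  also have "\<dots> = 1 / DD (n div 2)" by (simp add: DDk)
  finally have b1: "(real k / 12) ^ k \<le> 1 / DD (n div 2)" .
  define X where "X = (real n / 40) powr (real n / 40)"
  have base: "real n / 40 \<ge> 10" using n by simp
  have "X \<le> (real n / 40) powr real k" unfolding X_def using base kn by (intro powr_mono) auto
  also have "\<dots> \<le> (real k / 12) powr real k" using base kn by (intro powr_mono2) auto
  also have "\<dots> = (real k / 12) ^ k" using kn n by (simp add: powr_realpow)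
  finally have XY: "X \<le> 1 / DD (n div 2)" using b1 by simp
  have "X \<ge> (real n / 40) powr 1" unfolding X_def using base by (intro powr_mono) auto
  then have X4: "X \<ge> 4" using base by simp
  show ?thesis using XY X4 unfolding X_def[symmetric] by (simp add: field_simps)
qed

lemma expected_bound:
  assumes n: "n \<ge> 4"
  defines "N \<equiv> nat \<lfloor>1 / (2 * DD (n div 2))\<rfloor>"
  shows "expected_consensus_time n (advs n) (xinit n) \<ge> ennreal (real N / 2)"
proof -
  let ?d = "DD (n div 2)"
  have dpos: "?d > 0" by (simp add: DD_def)
  have Nd: "real N * ?d \<le> 1/2"
  proof -
    have y0: "0 \<le> 1 / (2 * ?d)" using dpos by simp
    then have "real N = of_int \<lfloor>1 / (2 * ?d)\<rfloor>" unfolding N_def by simp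
    then have "real N \<le> 1 / (2 * ?d)" by simp
    then have "real N * ?d \<le> 1 / (2 * ?d) * ?d" using dpos by (intro mult_right_mono) auto
    then show ?thesis using dpos by simp
  qed
  have e1: "ennreal (real N / 2) = ennreal (real N) * ennreal (1/2)"
    by (subst ennreal_mult[symmetric]) simp_all
  have "ennreal (real N / 2) = (\<Sum>t<N. ennreal (1/2))"
    unfolding e1 by (simp only: sum_constant ennreal_of_nat_eq_real_of_nat card_lessThan)
  also have "\<dots> \<le> (\<Sum>t<N. ennreal (prob_not_consensus_by n (advs n) (xinit n) t))"
  proof (intro sum_mono ennreal_leI)
    fix t assume "t \<in> {..<N}"
    then have "real t * ?d \<le> real N * ?d" using dpos by (intro mult_right_mono) auto
    then show "1/2 \<le> prob_not_consensus_by n (advs n) (xinit n) t"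
      using prob_bound[OF n, of t] Nd by linarith
  qed
  also have "\<dots> \<le> expected_consensus_time n (advs n) (xinit n)"
    unfolding expected_consensus_time_def by (intro sum_le_suminf) auto
  finally show ?thesis .
qed


lemma main_aux:
  assumes n: "n \<ge> 400"
  shows "valid_adversary n (advs n) \<and> expected_consensus_time n (advs n) (xinit n)
          \<ge> ennreal (1/8 * (real n / 40) powr (real n / 40))"
proof -
  have n4: "n \<ge> 4" using n by simp
  show ?thesis
  proof
    show "valid_adversary n (advs n)" by (rule valid_advs[OF n4])
    let ?d = "DD (n div 2)"
    define N where "N = nat \<lfloor>1 / (2 * ?d)\<rfloor>"
    have dpos: "?d > 0" by (simp add: DD_def)
    have "real N \<ge> 1 / (2 * ?d) - 1"
    proof -
      have y0: "0 \<le> 1 / (2 * ?d)" using dpos by simp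
      then have "real N = of_int \<lfloor>1 / (2 * ?d)\<rfloor>" unfolding N_def by simp
      then show ?thesis by linarith
    qed
    then have "real N / 2 \<ge> 1 / (4 * ?d) - 1/2" using dpos by (simp add: field_simps)
    then have "1/8 * (real n / 40) powr (real n / 40) \<le> real N / 2" using final_num[OF n] by linarith
    then have "ennreal (1/8 * (real n / 40) powr (real n / 40)) \<le> ennreal (real N / 2)"
      by (rule ennreal_leI)
    also have "\<dots> \<le> expected_consensus_time n (advs n) (xinit n)"
      using expected_bound[OF n4] unfolding N_def by simp
    finally show "expected_consensus_time n (advs n) (xinit n) \<ge> ennreal (1/8 * (real n / 40) powr (real n / 40))" .
  qed
qed

theorem mainTheorem7:
  shows "\<exists>c::real. c > 0 \<and> (\<exists>C::real. C > 0 \<and> (\<exists>n0::nat. \<forall>n\<ge>n0.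
           \<exists>adv x0. valid_adversary n adv \<and>
             expected_consensus_time n adv x0
               \<ge> ennreal (C * (real n / c) powr (real n / c))))"
  using main_aux by (intro exI[of _ "40::real"] conjI exI[of _ "1/8::real"] exI[of _ "400::nat"] allI impI) auto

end
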